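(* Let $F$ be an algebraically closed field of characteristic different from $2$ and $3$, and let $K_{10}$ be the Kac Jordan superalgebra over $F$ with basis and multiplication as described in the context. Then every maximal subalgebra of $K_{10}$ is, up to an automorphism of $K_{10}$, one of the following: (i) $(K_{10})_{\bar 0}$; (ii) the subalgebra with basis $\{e,f,a,p_1,p_2\}$; (iii) the subalgebra with basis $\{e,f,a+b,c_1,p_1,q_1,p_2+q_2\}$; (iv) the subalgebra with basis $\{e,f,a,b,c_1,p_1,q_1\}$.
   Context: $K_{10}=J_{\bar 0}\oplus J_{\bar 1}$ has even part $J_{\bar 0}$ with basis $e,a,b,c_1,c_2,f$ and odd part $J_{\bar 1}$ with basis $p_1,p_2,q_1,q_2$. The product is supercommutative ($uv=(-1)^{\bar u\bar v}vu$ for homogeneous $u,v$) and determined by the following products (all products of basis elements not listed, up to supercommutativity, are $0$): $e^2=e$, $ea=a$, $eb=b$, $ec_i=c_i$, $ef=0$, $ep_i=\tfrac12p_i$, $eq_i=\tfrac12 q_i$; $f^2=f$, $fp_i=\tfrac12p_i$, $fq_i=\tfrac12 q_i$ ($f$ annihilates $e,a,b,c_1,c_2$); $a^2=4e$, $ap_i=p_i$, $aq_i=-q_i$; $b^2=-4e$, $bp_i=q_i$, $bq_i=-p_i$; $c_1c_2=2e$, $c_1^2=c_2^2=0$, $c_1p_2=q_1$, $c_1q_2=p_1$, $c_1p_1=c_1q_1=0$, $c_2p_1=q_2$, $c_2q_1=p_2$, $c_2p_2=c_2q_2=0$; $a,b,c_1,c_2$ are pairwise orthogonal in the sense that $ab=ac_i=bc_i=0$;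 $p_1p_2=a+2(e-3f)$, $p_1q_1=2c_1$, $p_1q_2=b$, $p_2q_1=-b$, $p_2q_2=-2c_2$, $q_1q_2=a-2(e-3f)$, and $p_i^2=q_i^2=0$ (odd–odd products are skew-symmetric, e.g. $p_2p_1=-p_1p_2$). This is a simple Jordan superalgebra. Subalgebras are understood in the graded sense (spanned by homogeneous elements); a maximal subalgebra is a proper subalgebra not properly contained in any proper subalgebra. Automorphisms are grading-preserving algebra automorphisms. *)

theory Defs
  imports Main "HOL-Computational_Algebra.Polynomial"
begin

definition alg_closed :: "'a::field itself \<Rightarrow> bool" where
  "alg_closed _ \<longleftrightarrow> (\<forall>p :: 'a poly. degree p > 0 \<longrightarrow> (\<exists>x. poly p x = 0))"

datatype kb = E | A | B | C1 | C2 | F | P1 | P2 | Q1 | Q2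

instance kb :: finite
proof
  have "UNIV = set [E, A, B, C1, C2, F, P1, P2, Q1, Q2]"
    by (auto intro: kb.exhaust)
  then show "finite (UNIV :: kb set)" by (metis List.finite_set)
qed

fun kodd :: "kb \<Rightarrow> bool" where
  "kodd P1 = True" | "kodd P2 = True" | "kodd Q1 = True" | "kodd Q2 = True"
| "kodd _ = False"

type_synonym 'a k10 = "kb \<Rightarrow> 'a"

definition kadd :: "'a::field k10 \<Rightarrow> 'a k10 \<Rightarrow> 'a k10" where
  "kadd u v = (\<lambda>i. u i + v i)"

definition ksmul :: "'a::field \<Rightarrow> 'a k10 \<Rightarrow> 'a k10" where
  "ksmul c v = (\<lambda>i. c * v i)"

definition kzero :: "'a::field k10" where
  "kzero = (\<lambda>i. 0)"

definition bv :: "kb \<Rightarrow> 'a::field k10" where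
  "bv k = (\<lambda>i. if i = k then 1 else 0)"

text \<open>Listed products of basis elements (one order per unordered pair).\<close>
fun bp0 :: "kb \<Rightarrow> kb \<Rightarrow> 'a::field k10" where
  "bp0 E E = bv E"
| "bp0 E A = bv A"
| "bp0 E B = bv B"
| "bp0 E C1 = bv C1"
| "bp0 E C2 = bv C2"
| "bp0 E P1 = ksmul (1/2) (bv P1)"
| "bp0 E P2 = ksmul (1/2) (bv P2)"
| "bp0 E Q1 = ksmul (1/2) (bv Q1)"
| "bp0 E Q2 = ksmul (1/2) (bv Q2)"
| "bp0 F F = bv F"
| "bp0 F P1 = ksmul (1/2) (bv P1)"
| "bp0 F P2 = ksmul (1/2) (bv P2)"
| "bp0 F Q1 = ksmul (1/2) (bv Q1)"
| "bp0 F Q2 = ksmul (1/2) (bv Q2)"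
| "bp0 A A = ksmul 4 (bv E)"
| "bp0 A P1 = bv P1"
| "bp0 A P2 = bv P2"
| "bp0 A Q1 = ksmul (-1) (bv Q1)"
| "bp0 A Q2 = ksmul (-1) (bv Q2)"
| "bp0 B B = ksmul (-4) (bv E)"
| "bp0 B P1 = bv Q1"
| "bp0 B P2 = bv Q2"
| "bp0 B Q1 = ksmul (-1) (bv P1)"
| "bp0 B Q2 = ksmul (-1) (bv P2)"
| "bp0 C1 C2 = ksmul 2 (bv E)"
| "bp0 C1 P2 = bv Q1"
| "bp0 C1 Q2 = bv P1"
| "bp0 C2 P1 = bv Q2"
| "bp0 C2 Q1 = bv P2"
| "bp0 P1 P2 = kadd (bv A) (kadd (ksmul 2 (bv E)) (ksmul (-6) (bv F)))"
| "bp0 P1 Q1 = ksmul 2 (bv C1)"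
| "bp0 P1 Q2 = bv B"
| "bp0 P2 Q1 = ksmul (-1) (bv B)"
| "bp0 P2 Q2 = ksmul (-2) (bv C2)"
| "bp0 Q1 Q2 = kadd (bv A) (kadd (ksmul (-2) (bv E)) (ksmul 6 (bv F)))"
| "bp0 _ _ = kzero"

text \<open>Full product of basis elements, extended by supercommutativity
  (uv = (-1)^{|u||v|} vu).\<close>
definition bp :: "kb \<Rightarrow> kb \<Rightarrow> 'a::field k10" where
  "bp x y = (if x = y then bp0 x x
             else kadd (bp0 x y) (ksmul (if kodd x \<and> kodd y then -1 else 1) (bp0 y x)))"

definition kmult :: "'a::field k10 \<Rightarrow> 'a k10 \<Rightarrow> 'a k10" where
  "kmult u v = (\<lambda>k. \<Sum>i\<in>UNIV. \<Sum>j\<in>UNIV. u i * v j * bp i j k)"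

definition even_part :: "'a::field k10 \<Rightarrow> 'a k10" where
  "even_part x = (\<lambda>i. if kodd i then 0 else x i)"

definition odd_part :: "'a::field k10 \<Rightarrow> 'a k10" where
  "odd_part x = (\<lambda>i. if kodd i then x i else 0)"

text \<open>Graded subalgebra: a subspace closed under the product and spanned by
  homogeneous elements (equivalently, closed under the homogeneous projections).\<close>
definition is_subalg :: "'a::field k10 set \<Rightarrow> bool" where
  "is_subalg S \<longleftrightarrow> kzero \<in> S
     \<and> (\<forall>x\<in>S. \<forall>y\<in>S. kadd x y \<in> S)
     \<and> (\<forall>c. \<forall>x\<in>S. ksmul c x \<in> S)
     \<and> (\<forall>x\<in>S. \<forall>y\<in>S. kmult x y \<in> S)
     \<and> (\<forall>x\<in>S. even_part x \<in> S \<and> odd_part x \<in> S)"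

definition is_maximal_subalg :: "'a::field k10 set \<Rightarrow> bool" where
  "is_maximal_subalg S \<longleftrightarrow> is_subalg S \<and> S \<noteq> UNIV
     \<and> (\<forall>T. is_subalg T \<and> S \<subseteq> T \<and> T \<noteq> UNIV \<longrightarrow> T = S)"

definition is_aut :: "('a::field k10 \<Rightarrow> 'a k10) \<Rightarrow> bool" where
  "is_aut \<phi> \<longleftrightarrow> bij \<phi>
     \<and> (\<forall>x y. \<phi> (kadd x y) = kadd (\<phi> x) (\<phi> y))
     \<and> (\<forall>c x. \<phi> (ksmul c x) = ksmul c (\<phi> x))
     \<and> (\<forall>x y. \<phi> (kmult x y) = kmult (\<phi> x) (\<phi> y))
     \<and> (\<forall>x. even_part x = x \<longrightarrow> even_part (\<phi> x) = \<phi> x)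
     \<and> (\<forall>x. odd_part x = x \<longrightarrow> odd_part (\<phi> x) = \<phi> x)"

definition kspan :: "'a::field k10 list \<Rightarrow> 'a k10 set" where
  "kspan vs = {foldr kadd (map2 ksmul cs vs) kzero | cs. length cs = length vs}"

definition M1 :: "'a::field k10 set" where
  "M1 = kspan [bv E, bv A, bv B, bv C1, bv C2, bv F]"

definition M2 :: "'a::field k10 set" where
  "M2 = kspan [bv E, bv F, bv A, bv P1, bv P2]"

definition M3 :: "'a::field k10 set" where
  "M3 = kspan [bv E, bv F, kadd (bv A) (bv B), bv C1, bv P1, bv Q1, kadd (bv P2) (bv Q2)]"

definition M4 :: "'a::field k10 set" where
  "M4 = kspan [bv E, bv F, bv A, bv B, bv C1, bv P1, bv Q1]"

end

theory Submission
  imports Defs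
begin

definition vec :: "'a \<Rightarrow> 'a \<Rightarrow> 'a \<Rightarrow> 'a \<Rightarrow> 'a \<Rightarrow> 'a \<Rightarrow> 'a \<Rightarrow> 'a \<Rightarrow> 'a \<Rightarrow> 'a \<Rightarrow> 'a k10" where
  "vec e a b c1 c2 f p1 p2 q1 q2 = (\<lambda>k. case k of E \<Rightarrow> e | A \<Rightarrow> a | B \<Rightarrow> b | C1 \<Rightarrow> c1 | C2 \<Rightarrow> c2
     | F \<Rightarrow> f | P1 \<Rightarrow> p1 | P2 \<Rightarrow> p2 | Q1 \<Rightarrow> q1 | Q2 \<Rightarrow> q2)"

lemma vec_app[simp]: "vec e a b c1 c2 f p1 p2 q1 q2 E = e" "vec e a b c1 c2 f p1 p2 q1 q2 A = a"
  "vec e a b c1 c2 f p1 p2 q1 q2 B = b" "vec e a b c1 c2 f p1 p2 q1 q2 C1 = c1"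
  "vec e a b c1 c2 f p1 p2 q1 q2 C2 = c2" "vec e a b c1 c2 f p1 p2 q1 q2 F = f"
  "vec e a b c1 c2 f p1 p2 q1 q2 P1 = p1" "vec e a b c1 c2 f p1 p2 q1 q2 P2 = p2"
  "vec e a b c1 c2 f p1 p2 q1 q2 Q1 = q1" "vec e a b c1 c2 f p1 p2 q1 q2 Q2 = q2"
  by (simp_all add: vec_def)

lemma vec_eq_iff: "(vec e a b c1 c2 f p1 p2 q1 q2 = vec e' a' b' c1' c2' f' p1' p2' q1' q2') \<longleftrightarrow>
  e = e' \<and> a = a' \<and> b = b' \<and> c1 = c1' \<and> c2 = c2' \<and> f = f' \<and> p1 = p1' \<and> p2 = p2' \<and> q1 = q1' \<and> q2 = q2'"
  by (metis vec_app)

lemma vec_eta: "x = vec (x E) (x A) (x B) (x C1) (x C2) (x F) (x P1) (x P2) (x Q1) (x Q2)"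
  apply (rule ext) subgoal for k by (cases k) simp_all done

lemma UNIV_kb: "(UNIV :: kb set) = {E, A, B, C1, C2, F, P1, P2, Q1, Q2}"
  by (auto intro: kb.exhaust)

lemma sum_kb: "(\<Sum>i\<in>UNIV. g i) = g E + g A + g B + g C1 + g C2 + g F + g P1 + g P2 + g Q1 + g Q2"
  for g :: "kb \<Rightarrow> 'a::comm_monoid_add"
  by (simp add: UNIV_kb add.assoc)

lemma kmult_vec: "kmult x y = vec (x E * y E + 4 * x A * y A - (4 * x B * y B) + 2 * x C1 * y C2 + 2 * x C2 * y C1 + 2 * x P1 * y P2 - (2 * x P2 * y P1) - (2 * x Q1 * y Q2) + 2 * x Q2 * y Q1) (x E * y A + x A * y E + x P1 * y P2 - (x P2 * y P1) + x Q1 * y Q2 - (x Q2 * y Q1)) (x E * y B + x B * y E + x P1 * y Q2 - (x P2 * y Q1) + x Q1 * y P2 - (x Q2 * y P1)) (x E * y C1 + x C1 * y E + 2 * x P1 * y Q1 - (2 * x Q1 * y P1)) (x E * y C2 + x C2 * y E - (2 * x P2 * y Q2) + 2 * x Q2 * y P2) (x F * y F - (6 * x P1 * y P2) + 6 * x P2 * y P1 + 6 * x Q1 * y Q2 - (6 * x Q2 * y Q1)) (x E * y P1 / 2 + x A * y P1 - (x B * y Q1) + x C1 * y Q2 + x F * y P1 / 2 + x P1 * y E / 2 + x P1 * y A + x P1 * y F / 2 - (x Q1 * y B) + x Q2 * y C1) (x E * y P2 / 2 + x A * y P2 - (x B * y Q2) + x C2 * y Q1 + x F * y P2 / 2 +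 x P2 * y E / 2 + x P2 * y A + x P2 * y F / 2 + x Q1 * y C2 - (x Q2 * y B)) (x E * y Q1 / 2 - (x A * y Q1) + x B * y P1 + x C1 * y P2 + x F * y Q1 / 2 + x P1 * y B + x P2 * y C1 + x Q1 * y E / 2 - (x Q1 * y A) + x Q1 * y F / 2) (x E * y Q2 / 2 - (x A * y Q2) + x B * y P2 + x C2 * y P1 + x F * y Q2 / 2 + x P1 * y C2 + x P2 * y B + x Q2 * y E / 2 - (x Q2 * y A) + x Q2 * y F / 2)"
  for x y :: "'a::field k10"
  apply (rule ext)
  subgoal for k by (cases k) (simp_all add: vec_def kmult_def sum_kb bp_def bv_def ksmul_def kadd_def kzero_def algebra_simps)
  done
definition Ua :: "'a::field \<Rightarrow> 'a k10 \<Rightarrow> 'a k10" where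
  "Ua t x = vec (x E) (x A - t * x C2) (x B - t * x C2) (x C1 + 2 * t * x A - 2 * t * x B) (x C2) (x F) (x P1 + t * x P2 - t * x Q2) (x P2) (x Q1 + t * x P2 - t * x Q2) (x Q2)"

definition La :: "'a::field \<Rightarrow> 'a k10 \<Rightarrow> 'a k10" where
  "La t x = vec (x E) (x A + t * x C1) (x B - t * x C1) (x C1) (x C2 - 2 * t * x A - 2 * t * x B) (x F) (x P1) (x P2 + t * x P1 + t * x Q1) (x Q1) (x Q2 - t * x P1 - t * x Q1)"

definition Ub :: "'a::field \<Rightarrow> 'a k10 \<Rightarrow> 'a k10" where
  "Ub t x = vec (x E) (x A + t * x C2) (x B - t * x C2) (x C1 - 2 * t * x A - 2 * t * x B) (x C2) (x F) (x P1 + t * x P2 + t * x Q2) (x P2) (x Q1 - t * x P2 - t * x Q2) (x Q2)"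

definition Lb :: "'a::field \<Rightarrow> 'a k10 \<Rightarrow> 'a k10" where
  "Lb t x = vec (x E) (x A - t * x C1) (x B - t * x C1) (x C1) (x C2 + 2 * t * x A - 2 * t * x B) (x F) (x P1) (x P2 + t * x P1 - t * x Q1) (x Q1) (x Q2 + t * x P1 - t * x Q1)"


lemma k10_eq: "x = y \<longleftrightarrow> x E = y E \<and> x A = y A \<and> x B = y B \<and> x C1 = y C1 \<and> x C2 = y C2 \<and> x F = y F
   \<and> x P1 = y P1 \<and> x P2 = y P2 \<and> x Q1 = y Q1 \<and> x Q2 = y Q2"
  for x y :: "kb \<Rightarrow> 'a"
  apply (rule iffI, simp)
  apply (rule ext) subgoal for k by (cases k) simp_all done

lemma kadd_app[simp]: "kadd x y k = x k + y k" by (simp add: kadd_def)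
lemma ksmul_app[simp]: "ksmul c x k = c * x k" by (simp add: ksmul_def)
lemma kzero_app[simp]: "kzero k = 0" by (simp add: kzero_def)
lemma even_app[simp]: "even_part x E = x E" "even_part x A = x A" "even_part x B = x B" "even_part x C1 = x C1"
  "even_part x C2 = x C2" "even_part x F = x F" "even_part x P1 = 0" "even_part x P2 = 0" "even_part x Q1 = 0" "even_part x Q2 = 0"
  by (simp_all add: even_part_def)
lemma odd_app[simp]: "odd_part x E = 0" "odd_part x A = 0" "odd_part x B = 0" "odd_part x C1 = 0"
  "odd_part x C2 = 0" "odd_part x F = 0" "odd_part x P1 = x P1" "odd_part x P2 = x P2" "odd_part x Q1 = x Q1" "odd_part x Q2 = x Q2"
  by (simp_all add: odd_part_def)
lemma bv_app[simp]: "bv k k = 1" "k \<noteq> j \<Longrightarrow> bv k j = 0" by (simp_all add: bv_def)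

definition good :: "('a::field k10 \<Rightarrow> 'a k10) \<Rightarrow> ('a k10 \<Rightarrow> 'a k10) \<Rightarrow> bool" where
  "good f g \<longleftrightarrow> is_aut f \<and> is_aut g \<and> (\<forall>x. g (f x) = x) \<and> (\<forall>x. f (g x) = x)"

lemma bij_inv2: "(\<And>x. g (f x) = x) \<Longrightarrow> (\<And>x. f (g x) = x) \<Longrightarrow> bij f"
  by (metis bijI injI surjI)

lemma is_aut_comp: "is_aut f \<Longrightarrow> is_aut g \<Longrightarrow> is_aut (g \<circ> f)"
  unfolding is_aut_def by (auto simp: bij_comp)

lemma good_comp: "good f f' \<Longrightarrow> good g g' \<Longrightarrow> good (g \<circ> f) (f' \<circ> g')"
  unfolding good_def by (auto intro: is_aut_comp)

lemma good_id: "good id id"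
  unfolding good_def is_aut_def by simp

lemma is_autI:
  assumes "\<And>x. g (f x) = x" "\<And>x. f (g x) = x"
   "\<And>x y. f (kadd x y) = kadd (f x) (f y)" "\<And>c x. f (ksmul c x) = ksmul c (f x)"
   "\<And>x y. f (kmult x y) = kmult (f x) (f y)"
   "\<And>x. x P1 = 0 \<Longrightarrow> x P2 = 0 \<Longrightarrow> x Q1 = 0 \<Longrightarrow> x Q2 = 0 \<Longrightarrow> f x P1 = 0 \<and> f x P2 = 0 \<and> f x Q1 = 0 \<and> f x Q2 = 0"
   "\<And>x. x E = 0 \<Longrightarrow> x A = 0 \<Longrightarrow> x B = 0 \<Longrightarrow> x C1 = 0 \<Longrightarrow> x C2 = 0 \<Longrightarrow> x F = 0 \<Longrightarrow>
        f x E = 0 \<and> f x A = 0 \<and> f x B = 0 \<and> f x C1 = 0 \<and> f x C2 = 0 \<and> f x F = 0"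
  shows "is_aut f"
proof -
  have ev: "even_part x = x \<longleftrightarrow> x P1 = 0 \<and> x P2 = 0 \<and> x Q1 = 0 \<and> x Q2 = 0" for x :: "'a k10"
    by (subst k10_eq) auto
  have od: "odd_part x = x \<longleftrightarrow> x E = 0 \<and> x A = 0 \<and> x B = 0 \<and> x C1 = 0 \<and> x C2 = 0 \<and> x F = 0" for x :: "'a k10"
    by (subst k10_eq) auto
  show ?thesis unfolding is_aut_def ev od
    using assms bij_inv2[of g f] by metis
qed

definition theta :: "'a::field k10 \<Rightarrow> 'a k10" where
  "theta x = vec (x E) (x A) (- x B) (- x C1) (- x C2) (x F) (x P1) (x P2) (- x Q1) (- x Q2)"

lemma aut_theta: "is_aut (theta :: 'a::field k10 \<Rightarrow> _)"
  by (rule is_autI[where g=theta]) (simp_all add: k10_eq theta_def kmult_vec algebra_simps)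

lemma good_theta: "good theta (theta :: 'a::field k10 \<Rightarrow> _)"
  unfolding good_def using aut_theta by (simp add: k10_eq theta_def)

lemma aut_Ua: "is_aut (Ua (t::'a::field))"
  apply (rule is_autI[where g="Ua (-t)"])
  subgoal by (simp add: k10_eq Ua_def algebra_simps)
  subgoal by (simp add: k10_eq Ua_def algebra_simps)
  subgoal by (simp add: k10_eq Ua_def algebra_simps)
  subgoal by (simp add: k10_eq Ua_def algebra_simps)
  subgoal by (simp add: k10_eq Ua_def kmult_vec algebra_simps add_divide_distrib diff_divide_distrib)
  subgoal by (simp add: k10_eq Ua_def)
  subgoal by (simp add: k10_eq Ua_def)
  done

lemma good_Ua: "good (Ua (t::'a::field)) (Ua (-t))"
  unfolding good_def using aut_Ua[of t] aut_Ua[of "-t"] by (simp add: k10_eq Ua_def algebra_simps)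

lemma aut_La: "is_aut (La (t::'a::field))"
  apply (rule is_autI[where g="La (-t)"])
  subgoal by (simp add: k10_eq La_def algebra_simps)
  subgoal by (simp add: k10_eq La_def algebra_simps)
  subgoal by (simp add: k10_eq La_def algebra_simps)
  subgoal by (simp add: k10_eq La_def algebra_simps)
  subgoal by (simp add: k10_eq La_def kmult_vec algebra_simps add_divide_distrib diff_divide_distrib)
  subgoal by (simp add: k10_eq La_def)
  subgoal by (simp add: k10_eq La_def)
  done

lemma good_La: "good (La (t::'a::field)) (La (-t))"
  unfolding good_def using aut_La[of t] aut_La[of "-t"] by (simp add: k10_eq La_def algebra_simps)

lemma aut_Ub: "is_aut (Ub (t::'a::field))"
  apply (rule is_autI[where g="Ub (-t)"])
  subgoal by (simp add: k10_eq Ub_def algebra_simps)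
  subgoal by (simp add: k10_eq Ub_def algebra_simps)
  subgoal by (simp add: k10_eq Ub_def algebra_simps)
  subgoal by (simp add: k10_eq Ub_def algebra_simps)
  subgoal by (simp add: k10_eq Ub_def kmult_vec algebra_simps add_divide_distrib diff_divide_distrib)
  subgoal by (simp add: k10_eq Ub_def)
  subgoal by (simp add: k10_eq Ub_def)
  done

lemma good_Ub: "good (Ub (t::'a::field)) (Ub (-t))"
  unfolding good_def using aut_Ub[of t] aut_Ub[of "-t"] by (simp add: k10_eq Ub_def algebra_simps)

lemma aut_Lb: "is_aut (Lb (t::'a::field))"
  apply (rule is_autI[where g="Lb (-t)"])
  subgoal by (simp add: k10_eq Lb_def algebra_simps)
  subgoal by (simp add: k10_eq Lb_def algebra_simps)
  subgoal by (simp add: k10_eq Lb_def algebra_simps)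
  subgoal by (simp add: k10_eq Lb_def algebra_simps)
  subgoal by (simp add: k10_eq Lb_def kmult_vec algebra_simps add_divide_distrib diff_divide_distrib)
  subgoal by (simp add: k10_eq Lb_def)
  subgoal by (simp add: k10_eq Lb_def)
  done

lemma good_Lb: "good (Lb (t::'a::field)) (Lb (-t))"
  unfolding good_def using aut_Lb[of t] aut_Lb[of "-t"] by (simp add: k10_eq Lb_def algebra_simps)





lemma pow2: "(2::'a::field) \<noteq> 0 \<Longrightarrow> (4::'a) \<noteq> 0" "(2::'a::field) \<noteq> 0 \<Longrightarrow> (8::'a) \<noteq> 0"
  "(2::'a::field) \<noteq> 0 \<Longrightarrow> (16::'a) \<noteq> 0"
proof -
  have a: "(4::'a) = 2 * 2" "(8::'a) = 2 * (2 * 2)" "(16::'a) = 2 * (2 * (2 * 2))" by simp_all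
  show "(2::'a) \<noteq> 0 \<Longrightarrow> (4::'a) \<noteq> 0" using a(1) by (metis mult_eq_0_iff)
  show "(2::'a) \<noteq> 0 \<Longrightarrow> (8::'a) \<noteq> 0" using a(2) by (metis mult_eq_0_iff)
  show "(2::'a) \<noteq> 0 \<Longrightarrow> (16::'a) \<noteq> 0" using a(3) by (metis mult_eq_0_iff)
qed

definition ov :: "'a::field \<Rightarrow> 'a \<Rightarrow> 'a \<Rightarrow> 'a \<Rightarrow> 'a k10" where
  "ov x1 x2 y1 y2 = vec 0 0 0 0 0 0 ((x1 + y1) / 2) ((x2 + y2) / 2) ((x1 - y1) / 2) ((y2 - x2) / 2)"

lemma ov_Ua: "(2::'a::field) \<noteq> 0 \<Longrightarrow> Ua t (ov x1 x2 y1 y2) = ov (x1 + 2 * t * x2) x2 y1 (y2::'a)"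
  by (simp add: k10_eq Ua_def ov_def field_simps pow2)
lemma ov_La: "(2::'a::field) \<noteq> 0 \<Longrightarrow> La t (ov x1 x2 y1 y2) = ov x1 (x2 + 2 * t * x1) y1 (y2::'a)"
  by (simp add: k10_eq La_def ov_def field_simps pow2)
lemma ov_Ub: "(2::'a::field) \<noteq> 0 \<Longrightarrow> Ub t (ov x1 x2 y1 y2) = ov x1 x2 (y1 + 2 * t * y2) (y2::'a)"
  by (simp add: k10_eq Ub_def ov_def field_simps pow2)
lemma ov_Lb: "(2::'a::field) \<noteq> 0 \<Longrightarrow> Lb t (ov x1 x2 y1 y2) = ov x1 x2 y1 (y2 + 2 * t * y1::'a)"
  by (simp add: k10_eq Lb_def ov_def field_simps pow2)
lemma ov_odd: "(2::'a::field) \<noteq> 0 \<Longrightarrow> odd_part (x::'a k10) = ov (x P1 + x Q1) (x P2 - x Q2) (x P1 - x Q1) (x P2 + x Q2)"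
  by (simp add: k10_eq ov_def field_simps pow2)

lemma sl2n:
  assumes two: "(2::'a::field) \<noteq> 0" and nz: "x1 \<noteq> 0 \<or> x2 \<noteq> (0::'a)"
  shows "\<exists>a b c. x1 + 2 * b * (x2 + 2 * a * x1) = 1 \<and> (x2 + 2 * a * x1) + 2 * c * (x1 + 2 * b * (x2 + 2 * a * x1)) = 0"
proof (cases "x2 = 0")
  case True
  then have "x1 \<noteq> 0" using nz by simp
  then show ?thesis using True two
    by (rule_tac x="1/2" in exI, rule_tac x="(1 - x1) / (2 * x1)" in exI, rule_tac x="- x1 / 2" in exI) (simp add: field_simps)
next
  case False
  then show ?thesis using two
    by (rule_tac x="0" in exI, rule_tac x="(1 - x1) / (2 * x2)" in exI, rule_tac x="- x2 / 2" in exI) (simp add: field_simps)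
qed

lemma sl2a:
  assumes two: "(2::'a::field) \<noteq> 0" and nz: "x1 \<noteq> 0 \<or> x2 \<noteq> (0::'a)"
  shows "\<exists>f g. good f g \<and> f (ov x1 x2 y1 y2) = ov 1 0 y1 y2"
proof -
  obtain a b c where abc: "x1 + 2 * b * (x2 + 2 * a * x1) = 1" "(x2 + 2 * a * x1) + 2 * c * (x1 + 2 * b * (x2 + 2 * a * x1)) = 0"
    using sl2n[OF two nz] by blast
  have g: "good (La c \<circ> Ua b \<circ> La a) (La (-a) \<circ> (Ua (-b) \<circ> La (-c)))"
    by (rule good_comp[OF good_La good_comp[OF good_Ua good_La]])
  show ?thesis
    by (rule exI[of _ "La c \<circ> Ua b \<circ> La a"], rule exI[of _ "La (-a) \<circ> (Ua (-b) \<circ> La (-c))"])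
      (use g abc in \<open>simp add: ov_La ov_Ua two\<close>)
qed

lemma sl2b:
  assumes two: "(2::'a::field) \<noteq> 0" and nz: "y1 \<noteq> 0 \<or> y2 \<noteq> (0::'a)"
  shows "\<exists>f g. good f g \<and> f (ov x1 x2 y1 y2) = ov x1 x2 1 0"
proof -
  obtain a b c where abc: "y1 + 2 * b * (y2 + 2 * a * y1) = 1" "(y2 + 2 * a * y1) + 2 * c * (y1 + 2 * b * (y2 + 2 * a * y1)) = 0"
    using sl2n[OF two nz] by blast
  have g: "good (Lb c \<circ> Ub b \<circ> Lb a) (Lb (-a) \<circ> (Ub (-b) \<circ> Lb (-c)))"
    by (rule good_comp[OF good_Lb good_comp[OF good_Ub good_Lb]])
  show ?thesis
    by (rule exI[of _ "Lb c \<circ> Ub b \<circ> Lb a"], rule exI[of _ "Lb (-a) \<circ> (Ub (-b) \<circ> Lb (-c))"])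
      (use g abc in \<open>simp add: ov_Lb ov_Ub two\<close>)
qed

lemma theta_ov: "theta (ov x1 x2 y1 y2) = ov y1 y2 x1 (x2::'a::field)"
  by (simp add: k10_eq theta_def ov_def field_simps)

section \<open>Subalgebras\<close>

lemma sa_add: "is_subalg T \<Longrightarrow> x \<in> T \<Longrightarrow> y \<in> T \<Longrightarrow> kadd x y \<in> T" by (simp add: is_subalg_def)
lemma sa_smul: "is_subalg T \<Longrightarrow> x \<in> T \<Longrightarrow> ksmul c x \<in> T" by (simp add: is_subalg_def)
lemma sa_mult: "is_subalg T \<Longrightarrow> x \<in> T \<Longrightarrow> y \<in> T \<Longrightarrow> kmult x y \<in> T" by (simp add: is_subalg_def)
lemma sa_even: "is_subalg T \<Longrightarrow> x \<in> T \<Longrightarrow> even_part x \<in> T" by (simp add: is_subalg_def)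
lemma sa_odd: "is_subalg T \<Longrightarrow> x \<in> T \<Longrightarrow> odd_part x \<in> T" by (simp add: is_subalg_def)
lemma sa_sm: "is_subalg T \<Longrightarrow> x \<in> T \<Longrightarrow> w = ksmul c x \<Longrightarrow> w \<in> T" by (simp add: is_subalg_def)
lemma sa_lin: "is_subalg T \<Longrightarrow> x \<in> T \<Longrightarrow> y \<in> T \<Longrightarrow> w = kadd (ksmul c x) (ksmul d y) \<Longrightarrow> w \<in> T"
  by (simp add: is_subalg_def)
lemma sa_lin3: "is_subalg T \<Longrightarrow> x \<in> T \<Longrightarrow> y \<in> T \<Longrightarrow> z \<in> T \<Longrightarrow>
   w = kadd (ksmul c x) (kadd (ksmul d y) (ksmul e z)) \<Longrightarrow> w \<in> T"
  by (simp add: is_subalg_def)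

lemma aut_zero: "is_aut f \<Longrightarrow> f kzero = kzero"
proof -
  assume "is_aut f"
  then have "f (ksmul 0 kzero) = ksmul 0 (f kzero)" by (simp add: is_aut_def)
  moreover have "ksmul 0 (kzero::'a k10) = kzero" "ksmul 0 (f kzero) = kzero" by (simp_all add: k10_eq)
  ultimately show ?thesis by simp
qed

lemma aut_parts:
  assumes "is_aut (f::'a::field k10 \<Rightarrow> 'a k10)"
  shows "f (even_part x) = even_part (f x) \<and> f (odd_part x) = odd_part (f x)"
proof -
  have split: "x = kadd (even_part x) (odd_part x)" by (simp add: k10_eq)
  have "even_part (even_part x) = even_part x" "odd_part (odd_part x) = odd_part x" by (simp_all add: k10_eq)
  then have e: "even_part (f (even_part x)) = f (even_part x)" and o: "odd_part (f (odd_part x)) = f (odd_part x)"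
    using assms by (simp_all add: is_aut_def)
  have "f x = f (kadd (even_part x) (odd_part x))" by (rule arg_cong[OF split])
  also have "\<dots> = kadd (f (even_part x)) (f (odd_part x))" using assms by (simp add: is_aut_def)
  finally have fx: "f x = kadd (f (even_part x)) (f (odd_part x))" .
  have e1: "f (even_part x) k = 0" if "kodd k" for k
    using fun_cong[OF e, of k] that by (simp add: even_part_def)
  have o1: "f (odd_part x) k = 0" if "\<not> kodd k" for k
    using fun_cong[OF o, of k] that by (simp add: odd_part_def)
  have "even_part (f x) = f (even_part x)"
    apply (subst fx) apply (rule ext) subgoal for k using e1[of k] o1[of k] by (cases k) (simp_all add: even_part_def) done
  moreover have "odd_part (f x) = f (odd_part x)"
    apply (subst fx) apply (rule ext) subgoal for k using e1[of k] o1[of k] by (cases k) (simp_all add: odd_part_def) done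
  ultimately show ?thesis by simp
qed

lemma aut_image_sa:
  assumes f: "is_aut f" and T: "is_subalg T"
  shows "is_subalg (f ` T)"
proof -
  have add: "f (kadd x y) = kadd (f x) (f y)" and sm: "f (ksmul c x) = ksmul c (f x)"
    and mu: "f (kmult x y) = kmult (f x) (f y)" for x y c
    using f by (simp_all add: is_aut_def)
  have z: "kzero \<in> f ` T" using T aut_zero[OF f] by (metis image_eqI is_subalg_def)
  have a: "kadd x y \<in> f ` T" if xy: "x \<in> f ` T" "y \<in> f ` T" for x y
  proof -
    obtain u v where uv: "u \<in> T" "v \<in> T" "x = f u" "y = f v" using xy by blast
    then have "kadd u v \<in> T" using T by (simp add: is_subalg_def)
    moreover have "kadd x y = f (kadd u v)" using uv add by simp
    ultimately show ?thesis by (metis imageI)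
  qed
  have m: "kmult x y \<in> f ` T" if xy: "x \<in> f ` T" "y \<in> f ` T" for x y
  proof -
    obtain u v where uv: "u \<in> T" "v \<in> T" "x = f u" "y = f v" using xy by blast
    then have "kmult u v \<in> T" using T by (simp add: is_subalg_def)
    moreover have "kmult x y = f (kmult u v)" using uv mu by simp
    ultimately show ?thesis by (metis imageI)
  qed
  have s: "ksmul c x \<in> f ` T" if xy: "x \<in> f ` T" for x c
  proof -
    obtain u where uv: "u \<in> T" "x = f u" using xy by blast
    then have "ksmul c u \<in> T" using T by (simp add: is_subalg_def)
    moreover have "ksmul c x = f (ksmul c u)" using uv sm by simp
    ultimately show ?thesis by (metis imageI)
  qed
  have p: "even_part x \<in> f ` T \<and> odd_part x \<in> f ` T" if xy: "x \<in> f ` T" for x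
  proof -
    obtain u where uv: "u \<in> T" "x = f u" using xy by blast
    then have "even_part u \<in> T" "odd_part u \<in> T" using T by (simp_all add: is_subalg_def)
    moreover have "even_part x = f (even_part u)" "odd_part x = f (odd_part u)" using uv aut_parts[OF f, of u] by simp_all
    ultimately show ?thesis by (metis imageI)
  qed
  show ?thesis unfolding is_subalg_def
  proof (intro conjI ballI allI)
    fix x y c assume "x \<in> f ` T" "y \<in> f ` T"
    then show "kadd x y \<in> f ` T" "kmult x y \<in> f ` T" by (rule a, rule m)
  next
    fix x c assume "x \<in> f ` T" then show "ksmul c x \<in> f ` T" by (rule s)
  next
    fix x assume "x \<in> f ` T" then show "even_part x \<in> f ` T" "odd_part x \<in> f ` T" using p by blast+
  qed (rule z)
qed

lemma good_image_proper:
  assumes "good f g" "T \<noteq> UNIV" shows "f ` T \<noteq> UNIV"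
proof
  assume "f ` T = UNIV"
  have "x \<in> T" for x
  proof -
    have "f x \<in> f ` T" using \<open>f ` T = UNIV\<close> by simp
    then obtain u where "u \<in> T" "f x = f u" by blast
    then have "g (f x) = g (f u)" by simp
    then show ?thesis using assms(1) \<open>u \<in> T\<close> by (simp add: good_def)
  qed
  then show False using assms(2) by blast
qed

lemma good_sym: "good f g \<Longrightarrow> good g f" by (auto simp: good_def)


lemma half0: "(2::'a::field) \<noteq> 0 \<Longrightarrow> a + a = (0::'a) \<Longrightarrow> a = 0"
  by (metis mult_2 mult_eq_0_iff)

abbreviation pv1 :: "'a::field k10" where "pv1 \<equiv> vec 0 0 0 0 0 0 1 0 0 0"
abbreviation pv2 :: "'a::field k10" where "pv2 \<equiv> vec 0 0 0 0 0 0 0 1 0 0"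
abbreviation qv1 :: "'a::field k10" where "qv1 \<equiv> vec 0 0 0 0 0 0 0 0 1 0"
abbreviation qv2 :: "'a::field k10" where "qv2 \<equiv> vec 0 0 0 0 0 0 0 0 0 1"

definition N1 :: "'a::field k10 set" where "N1 = {x. x P1 = 0 \<and> x P2 = 0 \<and> x Q1 = 0 \<and> x Q2 = 0}"
definition N2 :: "'a::field k10 set" where "N2 = {x. x B = 0 \<and> x C1 = 0 \<and> x C2 = 0 \<and> x Q1 = 0 \<and> x Q2 = 0}"
definition N3 :: "'a::field k10 set" where "N3 = {x. x B = x A \<and> x C2 = 0 \<and> x Q2 = x P2}"
definition N4 :: "'a::field k10 set" where "N4 = {x. x C2 = 0 \<and> x P2 = 0 \<and> x Q2 = 0}"

lemma sa_N1: "is_subalg (N1::'a::field k10 set)"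
  unfolding is_subalg_def N1_def by (simp add: kmult_vec)
lemma sa_N2: "is_subalg (N2::'a::field k10 set)"
  unfolding is_subalg_def N2_def by (simp add: kmult_vec)
lemma sa_N3: "is_subalg (N3::'a::field k10 set)"
  unfolding is_subalg_def N3_def by (simp add: kmult_vec algebra_simps)
lemma sa_N4: "is_subalg (N4::'a::field k10 set)"
  unfolding is_subalg_def N4_def by (simp add: kmult_vec)

lemma N_proper: "(N1::'a::field k10 set) \<noteq> UNIV" "(N2::'a::field k10 set) \<noteq> UNIV"
  "(N3::'a::field k10 set) \<noteq> UNIV" "(N4::'a::field k10 set) \<noteq> UNIV"
proof -
  have "qv2 \<notin> (N1::'a k10 set)" "qv2 \<notin> (N2::'a k10 set)" "qv2 \<notin> (N3::'a k10 set)" "qv2 \<notin> (N4::'a k10 set)"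
    by (simp_all add: N1_def N2_def N3_def N4_def)
  then show "(N1::'a::field k10 set) \<noteq> UNIV" "(N2::'a::field k10 set) \<noteq> UNIV"
  "(N3::'a::field k10 set) \<noteq> UNIV" "(N4::'a::field k10 set) \<noteq> UNIV" by auto
qed

lemma M1_eq: "(M1::'a::field k10 set) = N1"
proof
  show "M1 \<subseteq> (N1::'a k10 set)" unfolding M1_def kspan_def N1_def
    by (auto simp: length_Suc_conv numeral_eq_Suc bv_def)
  show "N1 \<subseteq> (M1::'a k10 set)"
  proof
    fix x :: "'a k10" assume "x \<in> N1"
    then show "x \<in> M1" unfolding M1_def kspan_def N1_def
      by (intro CollectI exI[of _ "[x E, x A, x B, x C1, x C2, x F]"]) (simp add: k10_eq bv_def)
  qed
qed

lemma M2_eq: "(M2::'a::field k10 set) = N2"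
proof
  show "M2 \<subseteq> (N2::'a k10 set)" unfolding M2_def kspan_def N2_def
    by (auto simp: length_Suc_conv numeral_eq_Suc bv_def)
  show "N2 \<subseteq> (M2::'a k10 set)"
  proof
    fix x :: "'a k10" assume "x \<in> N2"
    then show "x \<in> M2" unfolding M2_def kspan_def N2_def
      by (intro CollectI exI[of _ "[x E, x F, x A, x P1, x P2]"]) (simp add: k10_eq bv_def)
  qed
qed

lemma M3_eq: "(M3::'a::field k10 set) = N3"
proof
  show "M3 \<subseteq> (N3::'a k10 set)" unfolding M3_def kspan_def N3_def
    by (auto simp: length_Suc_conv numeral_eq_Suc bv_def)
  show "N3 \<subseteq> (M3::'a k10 set)"
  proof
    fix x :: "'a k10" assume "x \<in> N3"
    then show "x \<in> M3" unfolding M3_def kspan_def N3_def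
      by (intro CollectI exI[of _ "[x E, x F, x A, x C1, x P1, x Q1, x P2]"]) (simp add: k10_eq bv_def)
  qed
qed

lemma M4_eq: "(M4::'a::field k10 set) = N4"
proof
  show "M4 \<subseteq> (N4::'a k10 set)" unfolding M4_def kspan_def N4_def
    by (auto simp: length_Suc_conv numeral_eq_Suc bv_def)
  show "N4 \<subseteq> (M4::'a k10 set)"
  proof
    fix x :: "'a k10" assume "x \<in> N4"
    then show "x \<in> M4" unfolding M4_def kspan_def N4_def
      by (intro CollectI exI[of _ "[x E, x F, x A, x B, x C1, x P1, x Q1]"]) (simp add: k10_eq bv_def)
  qed
qed

lemma sa_all:
  assumes T: "is_subalg T"
    and "vec 1 0 0 0 0 0 0 0 0 0 \<in> T" "vec 0 1 0 0 0 0 0 0 0 0 \<in> T" "vec 0 0 1 0 0 0 0 0 0 0 \<in> T"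
    "vec 0 0 0 1 0 0 0 0 0 0 \<in> T" "vec 0 0 0 0 1 0 0 0 0 0 \<in> T" "vec 0 0 0 0 0 1 0 0 0 0 \<in> T"
    "pv1 \<in> T" "pv2 \<in> T" "qv1 \<in> T" "qv2 \<in> T"
  shows "T = (UNIV :: 'a::field k10 set)"
proof -
  have "x \<in> T" for x :: "'a k10"
  proof -
    have "x = kadd (ksmul (x E) (vec 1 0 0 0 0 0 0 0 0 0)) (kadd (ksmul (x A) (vec 0 1 0 0 0 0 0 0 0 0))
      (kadd (ksmul (x B) (vec 0 0 1 0 0 0 0 0 0 0)) (kadd (ksmul (x C1) (vec 0 0 0 1 0 0 0 0 0 0))
      (kadd (ksmul (x C2) (vec 0 0 0 0 1 0 0 0 0 0)) (kadd (ksmul (x F) (vec 0 0 0 0 0 1 0 0 0 0))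
      (kadd (ksmul (x P1) pv1) (kadd (ksmul (x P2) pv2) (kadd (ksmul (x Q1) qv1) (ksmul (x Q2) qv2)))))))))"
      by (simp add: k10_eq)
    also have "\<dots> \<in> T" by (intro sa_add[OF T] sa_smul[OF T] assms(2-))
    finally show ?thesis .
  qed
  then show ?thesis by blast
qed

lemma six: "(2::'a::field) \<noteq> 0 \<Longrightarrow> (3::'a) \<noteq> 0 \<Longrightarrow> (6::'a) \<noteq> 0"
proof -
  have "(6::'a) = 2 * 3" by simp
  then show "(2::'a) \<noteq> 0 \<Longrightarrow> (3::'a) \<noteq> 0 \<Longrightarrow> (6::'a) \<noteq> 0" by (metis mult_eq_0_iff)
qed

lemma full:
  assumes T: "is_subalg T" and two: "(2::'a::field) \<noteq> 0" and three: "(3::'a) \<noteq> 0"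
    and h: "pv1 \<in> T" "pv2 \<in> T" "qv1 \<in> T" "qv2 \<in> T"
  shows "T = (UNIV :: 'a k10 set)"
proof -
  have m1: "kmult pv1 pv2 \<in> T" "kmult qv1 qv2 \<in> T" "kmult pv1 qv1 \<in> T" "kmult pv1 qv2 \<in> T" "kmult pv2 qv2 \<in> T"
    using h by (simp_all add: sa_mult[OF T])
  have a: "vec 0 1 0 0 0 0 0 0 0 0 \<in> T"
    by (rule sa_lin[OF T m1(1) m1(2), where c="1/2" and d="1/2"]) (simp add: k10_eq kmult_vec field_simps two)
  have "kmult (vec 0 1 0 0 0 0 0 0 0 0) (vec 0 1 0 0 0 0 0 0 0 0) \<in> T" using a by (simp add: sa_mult[OF T])
  then have e: "vec 1 0 0 0 0 0 0 0 0 0 \<in> T"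
    by (rule sa_sm[OF T, where c="1/4"]) (simp add: k10_eq kmult_vec field_simps two pow2)
  have f: "vec 0 0 0 0 0 1 0 0 0 0 \<in> T"
    by (rule sa_lin3[OF T m1(1) a e, where c="-1/6" and d="1/6" and e="1/3"])
      (simp add: k10_eq kmult_vec field_simps two three six)
  have c1: "vec 0 0 0 1 0 0 0 0 0 0 \<in> T"
    by (rule sa_sm[OF T m1(3), where c="1/2"]) (simp add: k10_eq kmult_vec field_simps two)
  have b: "vec 0 0 1 0 0 0 0 0 0 0 \<in> T"
    by (rule sa_sm[OF T m1(4), where c="1"]) (simp add: k10_eq kmult_vec)
  have c2: "vec 0 0 0 0 1 0 0 0 0 0 \<in> T"
    by (rule sa_sm[OF T m1(5), where c="-1/2"]) (simp add: k10_eq kmult_vec field_simps two)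
  show ?thesis by (rule sa_all[OF T e a b c1 c2 f h])
qed

lemma L4:
  assumes T: "is_subalg T" and z: "\<forall>y\<in>T. y P2 = 0 \<and> y Q2 = (0::'a::field)"
    and s: "s \<in> T" "s P1 \<noteq> 0 \<or> s Q1 \<noteq> 0"
  shows "T \<subseteq> N4"
proof
  fix y assume y: "y \<in> T"
  have m: "kmult (even_part y) (odd_part s) \<in> T" by (intro sa_mult[OF T] sa_even[OF T] sa_odd[OF T] y s(1))
  have s0: "s P2 = 0" "s Q2 = 0" using z s(1) by auto
  have "(kmult (even_part y) (odd_part s)) P2 = 0 \<and> (kmult (even_part y) (odd_part s)) Q2 = 0" using z m by blast
  then have "y C2 * s Q1 = 0" "y C2 * s P1 = 0" by (simp_all add: kmult_vec s0)
  then have "y C2 = 0" using s(2) by auto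
  then show "y \<in> N4" using z y by (simp add: N4_def)
qed

lemma L3:
  assumes T: "is_subalg T" and two: "(2::'a::field) \<noteq> 0" and z: "\<forall>y\<in>T. y P2 = (y Q2::'a)"
    and w1: "vec 0 0 0 0 0 0 1 0 (-1) 0 \<in> T" and w2: "vec 0 0 0 0 0 0 0 1 0 1 \<in> T"
  shows "T \<subseteq> N3"
proof
  fix y assume y: "y \<in> T"
  have m: "kmult (even_part y) (vec 0 0 0 0 0 0 1 0 (-1) 0) \<in> T" "kmult (even_part y) (vec 0 0 0 0 0 0 0 1 0 1) \<in> T"
    by (intro sa_mult[OF T] sa_even[OF T] y w1 w2)+
  have h1: "(kmult (even_part y) (vec 0 0 0 0 0 0 1 0 (-1) 0)) P2 = (kmult (even_part y) (vec 0 0 0 0 0 0 1 0 (-1) 0)) Q2"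
    using z m(1) by blast
  have h2: "(kmult (even_part y) (vec 0 0 0 0 0 0 0 1 0 1)) P2 = (kmult (even_part y) (vec 0 0 0 0 0 0 0 1 0 1)) Q2"
    using z m(2) by blast
  have "y C2 + y C2 = 0" using h1 by (simp add: kmult_vec)
  then have c2: "y C2 = 0" using half0[OF two] by blast
  have "(y A - y B) + (y A - y B) = 0" using h2 by (simp add: kmult_vec algebra_simps)
  then have "y A - y B = 0" using half0[OF two] by blast
  moreover have "y P2 = y Q2" using z y by blast
  ultimately show "y \<in> N3" using c2 by (simp add: N3_def)
qed

lemma L2:
  assumes T: "is_subalg T" and z: "\<forall>y\<in>T. y Q1 = 0 \<and> y Q2 = (0::'a::field)"
    and h: "pv1 \<in> T" "pv2 \<in> T"
  shows "T \<subseteq> N2"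
proof
  fix y assume y: "y \<in> T"
  have m: "kmult (even_part y) pv1 \<in> T" "kmult (even_part y) pv2 \<in> T"
    by (intro sa_mult[OF T] sa_even[OF T] y h)+
  have "(kmult (even_part y) pv1) Q1 = 0 \<and> (kmult (even_part y) pv1) Q2 = 0" "(kmult (even_part y) pv2) Q1 = 0"
    using z m by blast+
  then have "y B = 0" "y C2 = 0" "y C1 = 0" by (simp_all add: kmult_vec)
  then show "y \<in> N2" using z y by (simp add: N2_def)
qed


lemma M3case:
  fixes T :: "'a::field k10 set"
  assumes T: "is_subalg T" and two: "(2::'a::field) \<noteq> 0" and three: "(3::'a) \<noteq> 0" and prp: "T \<noteq> UNIV"
    and h: "pv1 \<in> T" "qv1 \<in> T" "vec 0 0 0 0 0 0 0 1 0 1 \<in> T"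
  shows "T \<subseteq> N3"
proof -
  have z: "\<forall>y\<in>T. y P2 = y Q2"
  proof (rule ccontr)
    assume "\<not> ?thesis" then obtain y where y: "y \<in> T" "y P2 \<noteq> y Q2" by blast
    then have ne: "y P2 - y Q2 \<noteq> 0" by simp
    have oy: "odd_part y \<in> T" using sa_odd[OF T y(1)] .
    have d1: "vec 0 0 0 0 0 0 0 (y P2) 0 (y Q2) \<in> T"
      by (rule sa_lin3[OF T oy h(1) h(2), where c=1 and d="- y P1" and e="- y Q1"]) (simp add: k10_eq)
    have d: "vec 0 0 0 0 0 0 0 (y P2 - y Q2) 0 0 \<in> T"
      by (rule sa_lin[OF T d1 h(3), where c="1" and d="- y Q2"]) (simp add: k10_eq)
    have p2: "pv2 \<in> T" by (rule sa_sm[OF T d, where c="1/(y P2 - y Q2)"]) (simp add: k10_eq ne y(2))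
    have q2: "qv2 \<in> T" by (rule sa_lin[OF T h(3) p2, where c="1" and d="-1"]) (simp add: k10_eq)
    show False using full[OF T two three h(1) p2 h(2) q2] prp by simp
  qed
  have w1: "vec 0 0 0 0 0 0 1 0 (-1) 0 \<in> T" by (rule sa_lin[OF T h(1) h(2), where c=1 and d="-1"]) (simp add: k10_eq)
  show ?thesis by (rule L3[OF T two z w1 h(3)])
qed

lemma CaseIq:
  fixes T :: "'a::field k10 set"
  assumes T: "is_subalg T" and two: "(2::'a::field) \<noteq> 0" and three: "(3::'a) \<noteq> 0" and prp: "T \<noteq> UNIV"
    and h: "pv1 \<in> T" "qv1 \<in> T" and x: "x \<in> T" "x P2 \<noteq> 0 \<or> x Q2 \<noteq> 0"
  shows "vec 0 0 0 0 0 0 0 1 0 1 \<in> T \<or> vec 0 0 0 0 0 0 0 1 0 (-1) \<in> T"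
proof -
  have ox: "odd_part x \<in> T" using sa_odd[OF T x(1)] .
  have r: "vec 0 0 0 0 0 0 0 (x P2) 0 (x Q2) \<in> T"
    by (rule sa_lin3[OF T ox h(1) h(2), where c=1 and d="- x P1" and e="- x Q1"]) (simp add: k10_eq)
  show ?thesis
  proof (cases "x Q2 = 0")
    case True
    then have nz: "x P2 \<noteq> 0" using x by simp
    have p2: "pv2 \<in> T" by (rule sa_sm[OF T r, where c="1 / x P2"]) (simp add: k10_eq True nz)
    have "kmult (kmult pv2 qv1) pv2 \<in> T" using p2 h by (simp add: sa_mult[OF T])
    then have q2: "qv2 \<in> T" by (rule sa_sm[OF T, where c="-1"]) (simp add: k10_eq kmult_vec)
    show ?thesis using full[OF T two three h(1) p2 h(2) q2] prp by simp
  next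
    case False
    have zr: "kmult (kmult pv1 (vec 0 0 0 0 0 0 0 (x P2) 0 (x Q2))) (vec 0 0 0 0 0 0 0 (x P2) 0 (x Q2)) \<in> T"
      using r h by (simp add: sa_mult[OF T])
    consider "x P2 = x Q2" | "x P2 = - x Q2" | "x P2 \<noteq> x Q2 \<and> x P2 \<noteq> - x Q2" by blast
    then show ?thesis
    proof cases
      case 1
      have "vec 0 0 0 0 0 0 0 1 0 1 \<in> T" by (rule sa_sm[OF T r, where c="1 / x Q2"]) (simp add: k10_eq 1 False)
      then show ?thesis by simp
    next
      case 2
      have "vec 0 0 0 0 0 0 0 1 0 (-1) \<in> T" by (rule sa_sm[OF T r, where c="- 1 / x Q2"]) (simp add: k10_eq 2 False)
      then show ?thesis by simp
    next
      case 3
      have a1: "x P2 - x Q2 \<noteq> 0" "x P2 + x Q2 \<noteq> 0" using 3 by (auto simp: add_eq_0_iff)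
      have D: "x P2 * x P2 - x Q2 * x Q2 \<noteq> 0"
      proof
        assume "x P2 * x P2 - x Q2 * x Q2 = 0"
        then have "(x P2 - x Q2) * (x P2 + x Q2) = 0" by (simp add: algebra_simps)
        then show False using a1 by simp
      qed
      have D2: "x P2 * x P2 \<noteq> x Q2 * x Q2" using D by simp
      have zeq: "kmult (kmult pv1 (vec 0 0 0 0 0 0 0 (x P2) 0 (x Q2))) (vec 0 0 0 0 0 0 0 (x P2) 0 (x Q2))
         = vec 0 0 0 0 0 0 0 (- (x P2 * x P2 + x Q2 * x Q2)) 0 (- (2 * x P2 * x Q2))"
        by (simp add: k10_eq kmult_vec algebra_simps)
      have v: "vec 0 0 0 0 0 0 0 (x P2 * x P2 - x Q2 * x Q2) 0 0 \<in> T"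
        by (rule sa_lin[OF T r zr, where c="2 * x P2" and d="1"]) (simp only: zeq, simp add: k10_eq algebra_simps)
      have p2: "pv2 \<in> T"
        by (rule sa_sm[OF T v, where c="1 / (x P2 * x P2 - x Q2 * x Q2)"]) (simp add: k10_eq D D2)
      have q2: "qv2 \<in> T"
        by (rule sa_lin[OF T r p2, where c="1 / x Q2" and d="- x P2 / x Q2"]) (simp add: k10_eq field_simps False)
      show ?thesis using full[OF T two three h(1) p2 h(2) q2] prp by simp
    qed
  qed
qed


lemma caseI:
  fixes T :: "'a::field k10 set"
  assumes T: "is_subalg T" and two: "(2::'a) \<noteq> 0" and three: "(3::'a) \<noteq> 0" and prp: "T \<noteq> UNIV"
    and h: "pv1 \<in> T"
  shows "\<exists>f g. good f g \<and> (f ` T \<subseteq> N2 \<or> f ` T \<subseteq> N3 \<or> f ` T \<subseteq> N4)"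
proof (cases "\<forall>y\<in>T. y P2 = 0 \<and> y Q2 = 0")
  case True
  have "T \<subseteq> N4" by (rule L4[OF T True h]) simp
  then show ?thesis by (intro exI[of _ id] exI[of _ id]) (simp add: good_id)
next
  case False
  then obtain x where x: "x \<in> T" "x P2 \<noteq> 0 \<or> x Q2 \<noteq> 0" by blast
  show ?thesis
  proof (cases "qv1 \<in> T")
    case True
    from CaseIq[OF T two three prp h True x] show ?thesis
    proof
      assume "vec 0 0 0 0 0 0 0 1 0 1 \<in> T"
      then have "T \<subseteq> N3" by (rule M3case[OF T two three prp h True])
      then show ?thesis by (intro exI[of _ id] exI[of _ id]) (simp add: good_id)
    next
      assume d: "vec 0 0 0 0 0 0 0 1 0 (-1) \<in> T"
      have U: "is_subalg (theta ` T)" by (rule aut_image_sa[OF aut_theta T])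
      have prpU: "theta ` T \<noteq> UNIV" by (rule good_image_proper[OF good_theta prp])
      have "theta pv1 \<in> theta ` T" "theta qv1 \<in> theta ` T" "theta (vec 0 0 0 0 0 0 0 1 0 (-1)) \<in> theta ` T"
        using h True d by blast+
      then have a: "pv1 \<in> theta ` T" "vec 0 0 0 0 0 0 0 0 (-1) 0 \<in> theta ` T" "vec 0 0 0 0 0 0 0 1 0 1 \<in> theta ` T"
        by (simp_all add: theta_def)
      have b: "qv1 \<in> theta ` T" by (rule sa_sm[OF U a(2), where c="-1"]) (simp add: k10_eq)
      have "theta ` T \<subseteq> N3" by (rule M3case[OF U two three prpU a(1) b a(3)])
      then show ?thesis using good_theta by blast
    qed
  next
    case False
    have zq2: "\<forall>y\<in>T. y Q2 = 0"
    proof (rule ccontr)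
      assume "\<not> ?thesis" then obtain y where y: "y \<in> T" "y Q2 \<noteq> 0" by blast
      have m: "kmult (kmult pv1 (odd_part y)) pv1 \<in> T" using h sa_odd[OF T y(1)] by (simp add: sa_mult[OF T])
      have "qv1 \<in> T" by (rule sa_lin[OF T m h, where c="1 / y Q2" and d="y P2 / y Q2"]) (simp add: k10_eq kmult_vec field_simps y(2))
      with False show False by simp
    qed
    have xq: "x Q2 = 0" using zq2 x(1) by blast
    have xp: "x P2 \<noteq> 0" using x xq by auto
    define c where "c = x Q1 / x P2"
    have r: "vec 0 0 0 0 0 0 0 1 c 0 \<in> T"
      by (rule sa_lin[OF T sa_odd[OF T x(1)] h, where c="1 / x P2" and d="- x P1 / x P2"])
         (simp add: k10_eq c_def field_simps xp xq)
    have zq1: "\<forall>y\<in>T. y Q1 = c * y P2"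
    proof (rule ccontr)
      assume "\<not> ?thesis" then obtain y where y: "y \<in> T" "y Q1 \<noteq> c * y P2" by blast
      then have ne: "y Q1 - c * y P2 \<noteq> 0" by simp
      have yq: "y Q2 = 0" using zq2 y(1) by blast
      have v: "vec 0 0 0 0 0 0 0 0 (y Q1 - c * y P2) 0 \<in> T"
        by (rule sa_lin3[OF T sa_odd[OF T y(1)] r h, where c="1" and d="- y P2" and e="- y P1"]) (simp add: k10_eq yq)
      have "qv1 \<in> T"
        by (rule sa_sm[OF T v, where c="1 / (y Q1 - c * y P2)"]) (simp add: k10_eq ne y(2))
      with False show False by simp
    qed
    have g: "good (Ub (c/2) \<circ> Ua (-c/2)) (Ua (- (- c / 2)) \<circ> Ub (- (c / 2)))"
      by (rule good_comp[OF good_Ua good_Ub])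
    then have af: "is_aut (Ub (c/2) \<circ> Ua (-c/2))" by (simp add: good_def)
    let ?U = "(Ub (c/2) \<circ> Ua (-c/2)) ` T"
    have U: "is_subalg ?U" by (rule aut_image_sa[OF af T])
    have "(Ub (c/2) \<circ> Ua (-c/2)) pv1 \<in> ?U" "(Ub (c/2) \<circ> Ua (-c/2)) (vec 0 0 0 0 0 0 0 1 c 0) \<in> ?U"
      using h r by blast+
    moreover have "(Ub (c/2) \<circ> Ua (-c/2)) pv1 = pv1" "(Ub (c/2) \<circ> Ua (-c/2)) (vec 0 0 0 0 0 0 0 1 c 0) = pv2"
      by (simp_all add: k10_eq Ua_def Ub_def field_simps two)
    ultimately have p: "pv1 \<in> ?U" "pv2 \<in> ?U" by simp_all
    have z: "\<forall>y\<in>?U. y Q1 = 0 \<and> y Q2 = 0"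
    proof
      fix y assume "y \<in> ?U"
      then obtain u where u: "u \<in> T" "y = (Ub (c/2) \<circ> Ua (-c/2)) u" by blast
      have "u Q1 = c * u P2" "u Q2 = 0" using u(1) zq1 zq2 by blast+
      then show "y Q1 = 0 \<and> y Q2 = 0" using u(2) by (simp add: Ua_def Ub_def field_simps two)
    qed
    have "?U \<subseteq> N2" by (rule L2[OF U z p])
    then show ?thesis using g by blast
  qed
qed

definition mixd :: "'a::field k10 \<Rightarrow> bool" where
  "mixd x \<longleftrightarrow> (x P1 + x Q1 \<noteq> 0 \<or> x P2 - x Q2 \<noteq> 0) \<and> (x P1 - x Q1 \<noteq> 0 \<or> x P2 + x Q2 \<noteq> 0)"

lemma caseII:
  fixes T :: "'a::field k10 set"
  assumes T: "is_subalg T" and two: "(2::'a) \<noteq> 0"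
    and w: "vec 0 0 0 0 0 0 1 0 (-1) 0 \<in> T" and nm: "\<not> (\<exists>y\<in>T. mixd y)"
  shows "T \<subseteq> N3 \<or> T \<subseteq> N4"
proof -
  have zX: "\<forall>y\<in>T. y P1 + y Q1 = 0 \<and> y P2 - y Q2 = 0"
  proof (rule ccontr)
    assume "\<not> ?thesis" then obtain y where y: "y \<in> T" "\<not> (y P1 + y Q1 = 0 \<and> y P2 - y Q2 = 0)" by blast
    have "\<not> mixd y" using nm y(1) by blast
    then have Y0: "y P1 - y Q1 = 0" "y P2 + y Q2 = 0" using y(2) by (auto simp: mixd_def)
    have yw: "kadd y (vec 0 0 0 0 0 0 1 0 (-1) 0) \<in> T" by (rule sa_add[OF T y(1) w])
    have e1: "(y P1 + 1) - (y Q1 + -1) = 2" using Y0(1) by (simp add: algebra_simps)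
    have "mixd (kadd y (vec 0 0 0 0 0 0 1 0 (-1) 0))"
      unfolding mixd_def using y(2) e1 two by (simp add: algebra_simps)
    then show False using nm yw by blast
  qed
  show ?thesis
  proof (cases "\<forall>y\<in>T. y P2 = 0")
    case True
    have "\<forall>y\<in>T. y P2 = 0 \<and> y Q2 = 0"
    proof
      fix y assume "y \<in> T"
      then have "y P2 = 0" "y P2 - y Q2 = 0" using True zX by blast+
      then show "y P2 = 0 \<and> y Q2 = 0" by simp
    qed
    then have "T \<subseteq> N4" by (rule L4[OF T _ w]) simp
    then show ?thesis by simp
  next
    case False
    then obtain y where y: "y \<in> T" "y P2 \<noteq> 0" by blast
    have yy: "y Q1 = - y P1" "y Q2 = y P2" using zX y(1) by (auto simp: add_eq_0_iff)
    have v: "vec 0 0 0 0 0 0 0 1 0 1 \<in> T"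
      by (rule sa_lin[OF T sa_odd[OF T y(1)] w, where c="1 / y P2" and d="- y P1 / y P2"])
        (simp add: k10_eq field_simps y(2) yy)
    have z: "\<forall>y\<in>T. y P2 = y Q2" using zX by auto
    have "T \<subseteq> N3" by (rule L3[OF T two z w v])
    then show ?thesis by simp
  qed
qed

lemma mixedcase:
  fixes T :: "'a::field k10 set"
  assumes T: "is_subalg T" and two: "(2::'a) \<noteq> 0" and three: "(3::'a) \<noteq> 0" and prp: "T \<noteq> UNIV"
    and x: "x \<in> T" "mixd x"
  shows "\<exists>f g. good f g \<and> (f ` T \<subseteq> N2 \<or> f ` T \<subseteq> N3 \<or> f ` T \<subseteq> N4)"
proof -
  have ox: "ov (x P1 + x Q1) (x P2 - x Q2) (x P1 - x Q1) (x P2 + x Q2) \<in> T"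
    using sa_odd[OF T x(1)] by (simp add: ov_odd[OF two])
  have nz: "x P1 + x Q1 \<noteq> 0 \<or> x P2 - x Q2 \<noteq> 0" "x P1 - x Q1 \<noteq> 0 \<or> x P2 + x Q2 \<noteq> 0"
    using x(2) by (auto simp: mixd_def)
  obtain f1 g1 where g1: "good f1 g1"
    and f1: "f1 (ov (x P1 + x Q1) (x P2 - x Q2) (x P1 - x Q1) (x P2 + x Q2)) = ov 1 0 (x P1 - x Q1) (x P2 + x Q2)"
    using sl2a[OF two nz(1)] by blast
  obtain f2 g2 where g2: "good f2 g2" and f2: "f2 (ov 1 0 (x P1 - x Q1) (x P2 + x Q2)) = ov 1 0 1 0"
    using sl2b[OF two nz(2)] by blast
  have g: "good (f2 \<circ> f1) (g1 \<circ> g2)" by (rule good_comp[OF g1 g2])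
  then have af: "is_aut (f2 \<circ> f1)" by (simp add: good_def)
  have U: "is_subalg ((f2 \<circ> f1) ` T)" by (rule aut_image_sa[OF af T])
  have prpU: "(f2 \<circ> f1) ` T \<noteq> UNIV" by (rule good_image_proper[OF g prp])
  have "(f2 \<circ> f1) (ov (x P1 + x Q1) (x P2 - x Q2) (x P1 - x Q1) (x P2 + x Q2)) \<in> (f2 \<circ> f1) ` T"
    using ox by blast
  moreover have "ov 1 0 1 0 = (pv1 :: 'a k10)" by (simp add: k10_eq ov_def two)
  ultimately have p: "pv1 \<in> (f2 \<circ> f1) ` T" using f1 f2 by simp
  obtain f3 g3 where g3: "good f3 g3" and inc: "f3 ` ((f2 \<circ> f1) ` T) \<subseteq> N2 \<or> f3 ` ((f2 \<circ> f1) ` T) \<subseteq> N3 \<or> f3 ` ((f2 \<circ> f1) ` T) \<subseteq> N4"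
    using caseI[OF U two three prpU p] by blast
  have "good (f3 \<circ> (f2 \<circ> f1)) ((g1 \<circ> g2) \<circ> g3)" by (rule good_comp[OF g g3])
  moreover have "f3 ` ((f2 \<circ> f1) ` T) = (f3 \<circ> (f2 \<circ> f1)) ` T" by (simp add: image_comp)
  ultimately show ?thesis using inc by metis
qed

lemma purecase:
  fixes T :: "'a::field k10 set"
  assumes T: "is_subalg T" and two: "(2::'a) \<noteq> 0" and three: "(3::'a) \<noteq> 0" and prp: "T \<noteq> UNIV"
    and s: "s \<in> T" "s P1 + s Q1 = 0" "s P2 - s Q2 = 0" "s P1 - s Q1 \<noteq> 0 \<or> s P2 + s Q2 \<noteq> 0"
  shows "\<exists>f g. good f g \<and> (f ` T \<subseteq> N2 \<or> f ` T \<subseteq> N3 \<or> f ` T \<subseteq> N4)"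
proof -
  have os: "ov 0 0 (s P1 - s Q1) (s P2 + s Q2) \<in> T"
    using sa_odd[OF T s(1)] by (simp add: ov_odd[OF two] s(2,3))
  obtain f g where fg: "good f g" and f: "f (ov 0 0 (s P1 - s Q1) (s P2 + s Q2)) = ov 0 0 1 0"
    using sl2b[OF two s(4)] by blast
  then have af: "is_aut f" by (simp add: good_def)
  have U: "is_subalg (f ` T)" by (rule aut_image_sa[OF af T])
  have prpU: "f ` T \<noteq> UNIV" by (rule good_image_proper[OF fg prp])
  have "ov 0 0 1 0 \<in> f ` T" using os f by (metis imageI)
  then have w: "vec 0 0 0 0 0 0 1 0 (-1) 0 \<in> f ` T"
    by (rule sa_sm[OF U, where c=2]) (simp add: k10_eq ov_def two)
  show ?thesis
  proof (cases "\<exists>y\<in>f ` T. mixd y")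
    case True
    then obtain y where y: "y \<in> f ` T" "mixd y" by blast
    obtain f3 g3 where g3: "good f3 g3" and inc: "f3 ` (f ` T) \<subseteq> N2 \<or> f3 ` (f ` T) \<subseteq> N3 \<or> f3 ` (f ` T) \<subseteq> N4"
      using mixedcase[OF U two three prpU y] by blast
    have "good (f3 \<circ> f) (g \<circ> g3)" by (rule good_comp[OF fg g3])
    moreover have "f3 ` (f ` T) = (f3 \<circ> f) ` T" by (simp add: image_comp)
    ultimately show ?thesis using inc by metis
  next
    case False
    have "f ` T \<subseteq> N3 \<or> f ` T \<subseteq> N4" by (rule caseII[OF U two w False])
    then show ?thesis using fg by blast
  qed
qed

lemma reduce:
  fixes T :: "'a::field k10 set"
  assumes T: "is_subalg T" and two: "(2::'a) \<noteq> 0" and three: "(3::'a) \<noteq> 0" and prp: "T \<noteq> UNIV"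
  shows "\<exists>f g. good f g \<and> (f ` T \<subseteq> N1 \<or> f ` T \<subseteq> N2 \<or> f ` T \<subseteq> N3 \<or> f ` T \<subseteq> N4)"
proof (cases "\<forall>y\<in>T. y P1 = 0 \<and> y P2 = 0 \<and> y Q1 = 0 \<and> y Q2 = 0")
  case True
  then have "T \<subseteq> N1" by (auto simp: N1_def)
  then show ?thesis by (intro exI[of _ id] exI[of _ id]) (simp add: good_id)
next
  case False
  then obtain x where x: "x \<in> T" "\<not> (x P1 = 0 \<and> x P2 = 0 \<and> x Q1 = 0 \<and> x Q2 = 0)" by blast
  show ?thesis
  proof (cases "\<exists>y\<in>T. mixd y")
    case True
    then obtain y where y: "y \<in> T" "mixd y" by blast
    obtain f g where "good f g" "f ` T \<subseteq> N2 \<or> f ` T \<subseteq> N3 \<or> f ` T \<subseteq> N4"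
      using mixedcase[OF T two three prp y] by blast
    then show ?thesis by (intro exI[of _ f] exI[of _ g]) auto
  next
    case False
    then have nm: "\<not> mixd x" using x(1) by blast
    have XY: "(x P1 + x Q1 \<noteq> 0 \<or> x P2 - x Q2 \<noteq> 0) \<or> (x P1 - x Q1 \<noteq> 0 \<or> x P2 + x Q2 \<noteq> 0)"
    proof (rule ccontr)
      assume "\<not> ?thesis"
      then have h: "x P1 + x Q1 = 0" "x P2 - x Q2 = 0" "x P1 - x Q1 = 0" "x P2 + x Q2 = 0" by auto
      have "x P1 + x P1 = 0" "x Q1 + x Q1 = 0" "x P2 + x P2 = 0" "x Q2 + x Q2 = 0"
        using h by (simp_all add: algebra_simps eq_neg_iff_add_eq_0 flip: eq_iff_diff_eq_0)
      then have "x P1 = 0" "x Q1 = 0" "x P2 = 0" "x Q2 = 0" by (simp_all add: half0[OF two])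
      then show False using x(2) by simp
    qed
    show ?thesis
    proof (cases "x P1 + x Q1 = 0 \<and> x P2 - x Q2 = 0")
      case True
      then have "x P1 - x Q1 \<noteq> 0 \<or> x P2 + x Q2 \<noteq> 0" using XY by blast
      then obtain f g where "good f g" "f ` T \<subseteq> N2 \<or> f ` T \<subseteq> N3 \<or> f ` T \<subseteq> N4"
        using purecase[OF T two three prp x(1)] True by blast
      then show ?thesis by (intro exI[of _ f] exI[of _ g]) auto
    next
      case False
      then have Y0: "x P1 - x Q1 = 0" "x P2 + x Q2 = 0" using nm by (auto simp: mixd_def)
      have U: "is_subalg (theta ` T)" by (rule aut_image_sa[OF aut_theta T])
      have prpU: "theta ` T \<noteq> UNIV" by (rule good_image_proper[OF good_theta prp])
      have tx: "theta x \<in> theta ` T" using x(1) by blast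
      have c: "theta x P1 + theta x Q1 = 0" "theta x P2 - theta x Q2 = 0"
        "theta x P1 - theta x Q1 \<noteq> 0 \<or> theta x P2 + theta x Q2 \<noteq> 0"
        using Y0 False by (simp_all add: theta_def)
      obtain f g where fg: "good f g" and inc: "f ` (theta ` T) \<subseteq> N2 \<or> f ` (theta ` T) \<subseteq> N3 \<or> f ` (theta ` T) \<subseteq> N4"
        using purecase[OF U two three prpU tx c] by blast
      have "good (f \<circ> theta) (theta \<circ> g)" by (rule good_comp[OF good_theta fg])
      moreover have "f ` (theta ` T) = (f \<circ> theta) ` T" by (simp add: image_comp)
      ultimately show ?thesis using inc by (intro exI[of _ "f \<circ> theta"] exI[of _ "theta \<circ> g"]) auto
    qed
  qed
qed

lemma char2: "CHAR('a::field) \<noteq> 2 \<Longrightarrow> (2::'a) \<noteq> 0"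
proof
  assume c: "CHAR('a) \<noteq> 2" and h: "(2::'a) = 0"
  have "of_nat 2 = (0::'a)" using h by simp
  then have d: "CHAR('a) dvd 2" by (simp only: of_nat_eq_0_iff_char_dvd)
  then have "CHAR('a) \<le> 2" by (rule dvd_imp_le) simp
  moreover have "CHAR('a) \<noteq> 0" using d by (metis dvd_0_left_iff zero_neq_numeral)
  moreover have "CHAR('a) \<noteq> 1" using CHAR_not_1[where 'a='a] by simp
  ultimately show False using c by linarith
qed

lemma char3: "CHAR('a::field) \<noteq> 3 \<Longrightarrow> (3::'a) \<noteq> 0"
proof
  assume c: "CHAR('a) \<noteq> 3" and h: "(3::'a) = 0"
  have "of_nat 3 = (0::'a)" using h by simp
  then have d: "CHAR('a) dvd 3" by (simp only: of_nat_eq_0_iff_char_dvd)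
  then have "CHAR('a) \<le> 3" by (rule dvd_imp_le) simp
  moreover have "CHAR('a) \<noteq> 0" using d by (metis dvd_0_left_iff zero_neq_numeral)
  moreover have "CHAR('a) \<noteq> 1" using CHAR_not_1[where 'a='a] by simp
  moreover have "CHAR('a) \<noteq> 2"
  proof
    assume "CHAR('a) = 2"
    then have "(2::nat) dvd 3" using d by simp
    then show False by presburger
  qed
  ultimately show False using c by linarith
qed

theorem theorem4p1:
  fixes S :: "'a::field k10 set"
  assumes "alg_closed TYPE('a)"
    and "CHAR('a) \<noteq> 2" and "CHAR('a) \<noteq> 3"
    and "is_maximal_subalg S"
  shows "\<exists>\<phi>. is_aut \<phi> \<and> (S = \<phi> ` M1 \<or> S = \<phi> ` M2 \<or> S = \<phi> ` M3 \<or> S = \<phi> ` M4)"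
proof -
  have two: "(2::'a) \<noteq> 0" using char2 assms(2) by blast
  have three: "(3::'a) \<noteq> 0" using char3 assms(3) by blast
  have S: "is_subalg S" and prp: "S \<noteq> UNIV"
    and mx: "\<And>T. is_subalg T \<Longrightarrow> S \<subseteq> T \<Longrightarrow> T \<noteq> UNIV \<Longrightarrow> T = S"
    using assms(4) unfolding is_maximal_subalg_def by blast+
  obtain f g where g: "good f g" and inc: "f ` S \<subseteq> N1 \<or> f ` S \<subseteq> N2 \<or> f ` S \<subseteq> N3 \<or> f ` S \<subseteq> N4"
    using reduce[OF S two three prp] by blast
  have ag: "is_aut g" using g by (simp add: good_def)
  have key: "S = g ` N" if "f ` S \<subseteq> N" "is_subalg N" "N \<noteq> UNIV" for N
  proof -
    have "S \<subseteq> g ` N"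
    proof
      fix x assume "x \<in> S"
      then have "f x \<in> N" using that(1) by blast
      moreover have "g (f x) = x" using g by (simp add: good_def)
      ultimately show "x \<in> g ` N" by (metis imageI)
    qed
    moreover have "is_subalg (g ` N)" by (rule aut_image_sa[OF ag that(2)])
    moreover have "g ` N \<noteq> UNIV" by (rule good_image_proper[OF good_sym[OF g] that(3)])
    ultimately show ?thesis using mx by metis
  qed
  from inc show ?thesis
  proof (elim disjE)
    assume "f ` S \<subseteq> N1"
    then have "S = g ` M1" using key sa_N1 N_proper(1) M1_eq by metis
    then show ?thesis using ag by blast
  next
    assume "f ` S \<subseteq> N2"
    then have "S = g ` M2" using key sa_N2 N_proper(2) M2_eq by metis
    then show ?thesis using ag by blast
  next
    assume "f ` S \<subseteq> N3"
    then have "S = g ` M3" using key sa_N3 N_proper(3) M3_eq by metis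
    then show ?thesis using ag by blast
  next
    assume "f ` S \<subseteq> N4"
    then have "S = g ` M4" using key sa_N4 N_proper(4) M4_eq by metis
    then show ?thesis using ag by blast
  qed
qed

end
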